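(* Let $E,F,W$ be finite-dimensional real inner product spaces, $\ell,\ell'\in\mathbf N$, let $L_0\in\mathrm{End}(E;F)\otimes T_\ell(\mathfrak g_1)$ be such that $\mathrm{Sym}(L_0)(D)$ is cocanceling, and let $M\in\mathrm{End}(F;W)\otimes T_{\ell'}(\mathfrak g_1)$. If there exists $\xi_0\in\mathbf R^m$ such that $\mathrm{Sym}(M)(\xi_0)$ is injective, then $\mathrm{Sym}(M\circ L_0)(D)$ is cocanceling.
   Context: $\mathfrak g_1$ is an $m$-dimensional real vector space (the first layer of the Lie algebra of a stratified homogeneous group) with basis $X_1,\dots,X_m$. $\mathcal I_j=\{1,\dots,m\}^j$; $T_j(\mathfrak g_1)$ is the $j$-fold tensor power with basis $X^\otimes_\lambda=X_{\lambda_1}\otimes\cdots\otimes X_{\lambda_j}$. For $L=\sum_{\lambda\in\mathcal I_j}B^\lambda X^\otimes_\lambda\in\mathrm{End}(E;F)\otimes T_j(\mathfrak g_1)$, $\mathrm{Sym}(L)(\xi)=\sum_\lambda\xi_{\lambda_1}\cdots\xi_{\lambda_j}B^\lambda\in\mathrm{End}(E;F)$ for $\xi\in\mathbf R^m$, and $\mathrm{Sym}(L)(D)$ is called cocanceling if $\bigcap_{\xi\in\mathbf R^m}\ker\mathrm{Sym}(L)(\xi)=\{0\}$. For $M=\sum_{\gamma'\in\mathcal I_{\ell'}}M^{\gamma'}X^\otimes_{\gamma'}$ and $L_0=\sum_{\gamma\in\mathcal I_\ell}L_0^{\gamma}X^\otimes_\gamma$, $M\circ L_0=\sum_{\gamma',\gamma}(M^{\gamma'}\circ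 L_0^\gamma)X^\otimes_{\gamma'}\otimes X^\otimes_\gamma\in\mathrm{End}(E;W)\otimes T_{\ell+\ell'}(\mathfrak g_1)$. *)

theory Defs
  imports "HOL-Analysis.Analysis"
begin

text \<open>The first layer g_1 has basis X_1..X_m indexed by a finite type 'm (so m = CARD('m)).
  An element of End(E;F) tensor T_j(g_1) is given by its coefficient family
  B : 'm list \<Rightarrow> (E \<Rightarrow>L F); only lists of length j (multi-indices in I_j) are relevant.\<close>

definition multi_indices :: "nat \<Rightarrow> ('m::finite) list set" where
  "multi_indices j = {lam. length lam = j}"

definition tsym :: "nat \<Rightarrow> (('m::finite) list \<Rightarrow> ('e::real_normed_vector \<Rightarrow>\<^sub>L 'f::real_normed_vector))
    \<Rightarrow> real^'m \<Rightarrow> ('e \<Rightarrow>\<^sub>L 'f)" where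
  "tsym j B xi = (\<Sum>lam\<in>multi_indices j. prod_list (map (\<lambda>k. xi $ k) lam) *\<^sub>R B lam)"

definition cocanceling :: "nat \<Rightarrow> (('m::finite) list \<Rightarrow> ('e::real_normed_vector \<Rightarrow>\<^sub>L 'f::real_normed_vector)) \<Rightarrow> bool" where
  "cocanceling j B \<longleftrightarrow> (\<Inter>xi::real^'m. {v. blinfun_apply (tsym j B xi) v = 0}) = {0}"

text \<open>M o L_0: coefficient of X_gamma' tensor X_gamma (multi-index gamma' @ gamma, with
  length gamma' = l') is M^gamma' o L_0^gamma.\<close>
definition tcomp :: "nat \<Rightarrow> (('m::finite) list \<Rightarrow> ('f::real_normed_vector \<Rightarrow>\<^sub>L 'w::real_normed_vector))
    \<Rightarrow> ('m list \<Rightarrow> ('e::real_normed_vector \<Rightarrow>\<^sub>L 'f)) \<Rightarrow> ('m list \<Rightarrow> ('e \<Rightarrow>\<^sub>L 'w))" where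
  "tcomp l' M L0 = (\<lambda>kappa. M (take l' kappa) o\<^sub>L L0 (drop l' kappa))"

end

theory Submission
  imports Defs "HOL-Computational_Algebra.Polynomial"
begin

lemma finite_mi: "finite (multi_indices j :: ('m::finite) list set)"
  unfolding multi_indices_def by (rule finite_list_length)

lemma tsym_apply:
  "blinfun_apply (tsym j B xi) v =
     (\<Sum>lam\<in>multi_indices j. prod_list (map (\<lambda>k. xi $ k) lam) *\<^sub>R blinfun_apply (B lam) v)"
  by (simp add: tsym_def blinfun.sum_left blinfun.scaleR_left)

lemma tsym_comp:
  fixes L0 :: "('m::finite) list \<Rightarrow> ('e::real_normed_vector \<Rightarrow>\<^sub>L 'f::real_normed_vector)"
    and M :: "'m list \<Rightarrow> ('f \<Rightarrow>\<^sub>L 'w::real_normed_vector)"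
  shows "blinfun_apply (tsym (l + l') (tcomp l' M L0) xi) v =
    blinfun_apply (tsym l' M xi) (blinfun_apply (tsym l L0 xi) v)"
proof -
  let ?p = "\<lambda>lam. prod_list (map (\<lambda>k. xi $ k) lam)"
  have img: "(multi_indices (l + l') :: 'm list set) = (\<lambda>(a,b). a @ b) ` (multi_indices l' \<times> multi_indices l)"
    apply (rule set_eqI, rule iffI)
    subgoal for x
      apply (rule image_eqI[of _ _ "(take l' x, drop l' x)"])
      apply (auto simp: multi_indices_def)
      done
    apply (auto simp: multi_indices_def)
    done
  have inj: "inj_on (\<lambda>(a,b). a @ b) (multi_indices l' \<times> multi_indices l :: ('m list \<times> 'm list) set)"
    by (auto simp: inj_on_def multi_indices_def)
  have "blinfun_apply (tsym (l + l') (tcomp l' M L0) xi) v =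
     (\<Sum>ab\<in>multi_indices l' \<times> multi_indices l.
        ?p (fst ab @ snd ab) *\<^sub>R blinfun_apply (M (fst ab)) (blinfun_apply (L0 (snd ab)) v))"
    unfolding tsym_apply img
    by (subst sum.reindex[OF inj]) (auto intro!: sum.cong simp: tcomp_def multi_indices_def)
  also have "\<dots> = (\<Sum>a\<in>multi_indices l'. \<Sum>b\<in>multi_indices l.
        (?p a * ?p b) *\<^sub>R blinfun_apply (M a) (blinfun_apply (L0 b) v))"
    by (subst sum.cartesian_product) (simp add: split_def)
  also have "\<dots> = blinfun_apply (tsym l' M xi) (blinfun_apply (tsym l L0 xi) v)"
    unfolding tsym_apply
    by (simp add: blinfun.sum_right blinfun.scaleR_right scaleR_sum_right)
  finally show ?thesis .
qed

lemma sum_split_add: "(\<Sum>j<k + N. f j) = (\<Sum>j<k. f j) + (\<Sum>j<N. f (k + j :: nat))"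
  for f :: "nat \<Rightarrow> 'a::comm_monoid_add"
  by (induction N) (simp_all add: add.assoc)

definition lpoly :: "real^'m \<Rightarrow> real^'m \<Rightarrow> 'm list \<Rightarrow> real poly" where
  "lpoly xi0 eta lam = prod_list (map (\<lambda>k. [:xi0 $ k, eta $ k:]) lam)"

lemma poly_lpoly: "poly (lpoly xi0 eta lam) t = prod_list (map (\<lambda>k. (xi0 + t *\<^sub>R eta) $ k) lam)"
  by (induction lam) (simp_all add: lpoly_def algebra_simps)

lemma degree_lpoly: "degree (lpoly xi0 eta lam) \<le> length lam"
proof (induction lam)
  case Nil then show ?case by (simp add: lpoly_def)
next
  case (Cons a lam)
  have "degree (lpoly xi0 eta (a # lam)) \<le> degree [:xi0 $ a, eta $ a:] + degree (lpoly xi0 eta lam)"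
    unfolding lpoly_def list.map prod_list.Cons by (rule degree_mult_le)
  also have "\<dots> \<le> 1 + length lam" using Cons by (simp add: degree_pCons_le)
  finally show ?case by simp
qed

lemma poly_expand:
  fixes p :: "real poly"
  assumes "degree p < N"
  shows "poly p t = (\<Sum>j<N. coeff p j * t ^ j)"
proof -
  have "poly p t = (\<Sum>j\<le>degree p. coeff p j * t ^ j)" by (simp add: poly_altdef)
  also have "\<dots> = (\<Sum>j<N. coeff p j * t ^ j)"
    by (rule sum.mono_neutral_left) (use assms in \<open>auto simp: coeff_eq_0\<close>)
  finally show ?thesis .
qed


theorem proposition6p1:
  fixes L0 :: "('m::finite) list \<Rightarrow> ('e::euclidean_space \<Rightarrow>\<^sub>L 'f::euclidean_space)"
    and M :: "'m list \<Rightarrow> ('f \<Rightarrow>\<^sub>L 'w::euclidean_space)"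
    and l l' :: nat
  assumes "cocanceling l L0"
    and "\<exists>xi0::real^'m. inj (blinfun_apply (tsym l' M xi0))"
  shows "cocanceling (l + l') (tcomp l' M L0)"
proof -
  have key: "v = 0" if H: "\<And>xi. blinfun_apply (tsym l' M xi) (blinfun_apply (tsym l L0 xi) v) = 0" for v
  proof -
    obtain xi0 :: "real^'m" where injA: "inj (blinfun_apply (tsym l' M xi0))" using assms(2) by blast
    have allz: "blinfun_apply (tsym l L0 xi) v = 0" for xi
    proof -
      define eta where "eta = xi - xi0"
      define N where "N = Suc l"
      define b where "b j = (\<Sum>lam\<in>multi_indices l. coeff (lpoly xi0 eta lam) j *\<^sub>R blinfun_apply (L0 lam) v)" for j
      define A where "A t = tsym l' M (xi0 + t *\<^sub>R eta)" for t
      define F where "F t = blinfun_apply (tsym l L0 (xi0 + t *\<^sub>R eta)) v" for t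
      have Fexp: "F t = (\<Sum>j<N. t ^ j *\<^sub>R b j)" for t
      proof -
        have "F t = (\<Sum>lam\<in>multi_indices l. (\<Sum>j<N. coeff (lpoly xi0 eta lam) j * t ^ j) *\<^sub>R blinfun_apply (L0 lam) v)"
          unfolding F_def tsym_apply
        proof (rule sum.cong[OF refl])
          fix lam :: "'m list" assume "lam \<in> multi_indices l"
          then have "degree (lpoly xi0 eta lam) < N"
            using degree_lpoly[of xi0 eta lam] by (simp add: multi_indices_def N_def)
          then show "prod_list (map (($) (xi0 + t *\<^sub>R eta)) lam) *\<^sub>R blinfun_apply (L0 lam) v =
            (\<Sum>j<N. coeff (lpoly xi0 eta lam) j * t ^ j) *\<^sub>R blinfun_apply (L0 lam) v"
            by (simp add: poly_lpoly[symmetric] poly_expand)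
        qed
        also have "\<dots> = (\<Sum>j<N. t ^ j *\<^sub>R b j)"
          unfolding b_def scaleR_sum_left scaleR_sum_right
          by (subst sum.swap) (simp add: mult.commute)
        finally show ?thesis .
      qed
      have bzero: "b j = 0" if "N \<le> j" for j
      proof -
        have "coeff (lpoly xi0 eta lam) j = 0" if "lam \<in> multi_indices l" for lam
          using degree_lpoly[of xi0 eta lam] that \<open>N \<le> j\<close>
          by (intro coeff_eq_0) (simp add: multi_indices_def N_def)
        then show ?thesis by (simp add: b_def)
      qed
      have Gexp: "blinfun_apply (A t) y = (\<Sum>lam\<in>multi_indices l'. poly (lpoly xi0 eta lam) t *\<^sub>R blinfun_apply (M lam) y)" for t y
        by (simp add: A_def tsym_apply poly_lpoly)
      have FA: "blinfun_apply (A t) (F t) = 0" for t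
        using H by (simp add: A_def F_def)
      have A0: "A 0 = tsym l' M xi0" by (simp add: A_def)
      have ind: "\<forall>j<k. b j = 0" for k
      proof (induction k)
        case 0 then show ?case by simp
      next
        case (Suc k)
        define h where "h t = (\<Sum>j<N. t ^ j *\<^sub>R b (k + j))" for t
        have Fh: "F t = t ^ k *\<^sub>R h t" for t
        proof -
          have "F t = (\<Sum>j<k + N. t ^ j *\<^sub>R b j)"
            unfolding Fexp by (rule sum.mono_neutral_left) (auto simp: bzero)
          also have "\<dots> = (\<Sum>j<N. t ^ (k + j) *\<^sub>R b (k + j))"
            unfolding sum_split_add using Suc.IH by simp
          also have "\<dots> = t ^ k *\<^sub>R h t"
            by (simp add: h_def scaleR_sum_right power_add)
          finally show ?thesis .
        qed
        define phi where "phi t = (\<Sum>lam\<in>multi_indices l'. poly (lpoly xi0 eta lam) t *\<^sub>R blinfun_apply (M lam) (h t))" for t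
        have phiA: "phi t = blinfun_apply (A t) (h t)" for t
          by (simp add: phi_def Gexp)
        have phinz: "phi t = 0" if "t \<noteq> 0" for t
        proof -
          have "t ^ k *\<^sub>R blinfun_apply (A t) (h t) = 0"
            using FA[of t] by (simp add: Fh blinfun.scaleR_right)
          then show ?thesis using that by (simp add: phiA)
        qed
        have hc: "isCont h 0" unfolding h_def by (intro continuous_intros)
        have "isCont phi 0" unfolding phi_def
          by (intro continuous_intros poly_isCont isCont_o2[OF hc] bounded_linear.isCont[OF blinfun.bounded_linear_right] hc)
        then have l1: "(phi \<longlongrightarrow> phi 0) (at 0)" by (simp add: isCont_def)
        have l2: "(phi \<longlongrightarrow> 0) (at 0)"
        proof (rule tendsto_eventually)
          show "\<forall>\<^sub>F t in at 0. phi t = 0"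
            unfolding eventually_at_filter by (simp add: phinz)
        qed
        have "phi 0 = 0" using tendsto_unique[OF _ l1 l2] by simp
        moreover have "h 0 = b k" unfolding h_def N_def sum.lessThan_Suc_shift by simp
        ultimately have "blinfun_apply (tsym l' M xi0) (b k) = blinfun_apply (tsym l' M xi0) 0"
          using phiA[of 0] A0 by simp
        then have "b k = 0" using injA by (metis injD)
        then show ?case using Suc.IH less_Suc_eq by auto
      qed
      have "F 1 = 0" unfolding Fexp using ind[of N] by simp
      then show ?thesis by (simp add: F_def eta_def)
    qed
    show "v = 0" using assms(1) allz unfolding cocanceling_def by blast
  qed
  show ?thesis
    unfolding cocanceling_def
    using key by (auto simp: tsym_comp)
qed

end
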